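(* There is an absolute constant $c>0$ such that for every integer $n\ge1$ and every $q\in(0,\infty)$, $$\sup_{0\ne f\in\mathcal{T}_n}\frac{|f(0)|}{\|f\|_{L_q[0,1]}} \ge c^{1+1/q}(1+qn)^{2/q}.$$
   Context: For an integer $n\ge1$, $\mathcal{T}_n$ denotes the set of all functions $f:\mathbb{R}\to\mathbb{C}$ of the form $f(t)=\sum_{j=1}^n a_j e^{i\lambda_j t}$ with $a_j\in\mathbb{C}$ (possibly zero) and real exponents $\lambda_1<\lambda_2<\cdots<\lambda_n$. $\|f\|_{L_q[0,1]}=(\int_0^1|f(t)|^q\,dt)^{1/q}$. *)

theory Defs
  imports "HOL-Analysis.Analysis"
begin

text \<open>Exponential sums with at most n terms: f t = sum_{j<n} a_j exp(i lambda_j t),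
  with strictly increasing real exponents lambda_0 < ... < lambda_{n-1}
  (indices shifted to 0..n-1) and arbitrary complex coefficients.\<close>
definition exp_sums :: "nat \<Rightarrow> (real \<Rightarrow> complex) set" where
  "exp_sums n = {f. \<exists>(a::nat \<Rightarrow> complex) (lam::nat \<Rightarrow> real).
       (\<forall>i j. i < j \<and> j < n \<longrightarrow> lam i < lam j) \<and>
       (\<forall>t. f t = (\<Sum>j<n. a j * exp (\<i> * complex_of_real (lam j * t))))}"

definition Lq01_norm :: "real \<Rightarrow> (real \<Rightarrow> complex) \<Rightarrow> real" where
  "Lq01_norm q f = (LINT t:{0..1}|lborel. norm (f t) powr q) powr (1 / q)"

end

theory Submission imports Defs "HOL-Computational_Algebra.Polynomial" begin


fun T :: "nat \<Rightarrow> real poly" where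
  "T 0 = 1" | "T (Suc 0) = [:0,1:]" | "T (Suc (Suc k)) = [:0,2:] * T (Suc k) - T k"

lemma cos_rec: "cos (real (Suc (Suc k)) * a) = 2 * cos a * cos (real (Suc k) * a) - cos (real k * a)"
proof -
  have "cos ((real k + 1) * a + a) + cos ((real k + 1) * a - a) = 2 * cos a * cos ((real k + 1) * a)"
    by (simp add: cos_add cos_diff)
  moreover have "(real k + 1) * a + a = real (Suc (Suc k)) * a" "(real k + 1) * a - a = real k * a"
    by (simp_all add: algebra_simps)
  ultimately show ?thesis by (simp add: add.commute)
qed

lemma T_cos: "poly (T k) (cos a) = cos (real k * a)"
proof (induction k rule: T.induct)
  case (3 k)
  have "poly (T (Suc (Suc k))) (cos a) = 2 * cos a * poly (T (Suc k)) (cos a) - poly (T k) (cos a)"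
    by simp
  then show ?case using 3 cos_rec[of k a] by simp
qed simp_all

lemma T_one: "poly (T k) 1 = 1"
  using T_cos[of k 0] by simp

lemma T_deg: "degree (T k) \<le> k"
proof (induction k rule: T.induct)
  case (3 k)
  have "degree ([:0,2:] * T (Suc k)) \<le> Suc (Suc k)"
    using degree_mult_le[of "[:0,2::real:]" "T (Suc k)"] 3 by simp
  moreover have "degree (T k) \<le> Suc (Suc k)" using 3 by simp
  ultimately show ?case by (simp add: degree_diff_le)
qed simp_all

lemma T_deriv: "poly (pderiv (T k)) 1 = real k ^ 2"
proof (induction k rule: T.induct)
  case (3 k)
  then show ?case by (simp add: pderiv_mult pderiv_pCons pderiv_diff pderiv_smult T_one power2_eq_square algebra_simps)
qed (simp_all add: pderiv_pCons)

lemma sin_mult_le: "\<bar>sin (real k * x)\<bar> \<le> real k * \<bar>sin x\<bar>"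
proof (induction k)
  case (Suc k)
  have "sin (real (Suc k) * x) = sin (real k * x) * cos x + cos (real k * x) * sin x"
    by (simp add: sin_add distrib_right)
  also have "\<bar>\<dots>\<bar> \<le> \<bar>sin (real k * x)\<bar> + \<bar>sin x\<bar>"
    using abs_triangle_ineq[of "sin (real k * x) * cos x" "cos (real k * x) * sin x"]
      mult_left_le_one_le[of "\<bar>sin (real k * x)\<bar>" "\<bar>cos x\<bar>"]
      mult_left_le_one_le[of "\<bar>sin x\<bar>" "\<bar>cos (real k * x)\<bar>"]
    by (simp add: abs_mult mult.commute)
  finally show ?case using Suc by (simp add: distrib_right)
qed simp

lemma kernel_poly:
  assumes m: "m \<ge> 1"
  shows "\<exists>P::real poly. degree P \<le> m - 1 \<and> poly P 0 = 1 \<and>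
     (\<forall>w\<in>{0..1}. 0 \<le> poly P w \<and> poly P w \<le> 1 \<and> real m ^ 2 * w * poly P w \<le> 1)"
proof -
  define R where "R = pcompose (T m) [:1,-2:]"
  have R0: "poly R 0 = 1" by (simp add: R_def poly_pcompose T_one)
  have "poly (1 - R) 0 = 0" by (simp add: R0)
  then have "[:-0,1:] dvd (1 - R)" using poly_eq_0_iff_dvd by blast
  then obtain Q where Q: "1 - R = [:0,1:] * Q" by (auto elim: dvdE)
  have degR: "degree (1 - R) \<le> m"
  proof -
    have "degree R \<le> m" using T_deg[of m] by (simp add: R_def degree_pcompose)
    then show ?thesis using degree_diff_le_max[of 1 R] by simp
  qed
  have degQ: "degree Q \<le> m - 1"
  proof (cases "Q = 0")
    case False
    then have "degree ([:0,1:] * Q) = degree Q + 1"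
      by (subst degree_mult_eq) auto
    with degR Q show ?thesis by simp
  qed simp
  have "pderiv (1 - R) = pderiv ([:0,1:] * Q)" using Q by simp
  then have "poly (pderiv (1 - R)) 0 = poly (pderiv ([:0,1:] * Q)) 0" by simp
  then have Q0: "poly Q 0 = 2 * real m ^ 2"
    by (simp add: R_def pderiv_diff pderiv_pcompose pderiv_mult pderiv_pCons poly_pcompose T_deriv)
  have main: "w * poly Q w = 2 * sin (real m * arcsin (sqrt w)) ^ 2 \<and> sin (arcsin (sqrt w)) ^ 2 = w"
    if w: "0 \<le> w" "w \<le> 1" for w
  proof -
    define \<phi> where "\<phi> = arcsin (sqrt w)"
    have s: "sin \<phi> = sqrt w" unfolding \<phi>_def using w by (intro sin_arcsin) (auto simp: real_sqrt_le_1_iff intro: order_trans[OF _ real_sqrt_ge_zero])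
    have s2: "sin \<phi> ^ 2 = w" using s w by simp
    have c2: "cos (2 * \<phi>) = 1 - 2 * w" using s2 by (simp add: cos_double_sin)
    have "poly R w = poly (T m) (cos (2 * \<phi>))"
      unfolding c2 by (simp add: R_def poly_pcompose algebra_simps)
    also have "\<dots> = cos (real m * (2 * \<phi>))" by (rule T_cos)
    also have "\<dots> = 1 - 2 * sin (real m * \<phi>) ^ 2"
      by (simp add: cos_double_sin[symmetric] mult.assoc[symmetric] mult.commute[of "real m" 2])
    finally have "poly (1 - R) w = 2 * sin (real m * \<phi>) ^ 2" by simp
    then show ?thesis using Q s2 by (simp add: \<phi>_def)
  qed
  define P where "P = smult (1 / (2 * real m ^ 2)) Q"
  have mpos: "real m > 0" using m by simp
  show ?thesis
  proof (intro exI[of _ P] conjI ballI)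
    show "degree P \<le> m - 1" using degQ by (simp add: P_def)
    show "poly P 0 = 1" using Q0 mpos by (simp add: P_def)
    fix w :: real assume "w \<in> {0..1}"
    then have w: "0 \<le> w" "w \<le> 1" by auto
    note mw = main[OF w]
    let ?s = "sin (arcsin (sqrt w))"
    have Qnn: "0 \<le> poly Q w"
    proof (cases "w = 0")
      case True then show ?thesis using Q0 by simp
    next
      case False
      with mw w have "w * poly Q w \<ge> 0" by simp
      with False w show ?thesis by (simp add: zero_le_mult_iff)
    qed
    have Qle: "poly Q w \<le> 2 * real m ^ 2"
    proof (cases "w = 0")
      case True then show ?thesis using Q0 by simp
    next
      case False
      have "sin (real m * arcsin (sqrt w)) ^ 2 \<le> (real m * \<bar>?s\<bar>) ^ 2"
        using sin_mult_le[of m "arcsin (sqrt w)"]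
        by (metis abs_ge_zero power2_abs power_mono)
      also have "\<dots> = real m ^ 2 * w" using mw by (simp add: power_mult_distrib)
      finally have "w * poly Q w \<le> w * (2 * real m ^ 2)" using mw by (simp add: algebra_simps)
      with False w show ?thesis by simp
    qed
    have wQ: "w * poly Q w \<le> 2"
    proof -
      have "sin (real m * arcsin (sqrt w)) ^ 2 \<le> 1"
        using abs_sin_le_one[of "real m * arcsin (sqrt w)"]
        by (metis abs_ge_zero power2_abs power_le_one)
      then show ?thesis using mw by simp
    qed
    show "0 \<le> poly P w" using Qnn by (simp add: P_def)
    show "poly P w \<le> 1" using Qle mpos by (simp add: P_def field_simps)
    show "real m ^ 2 * w * poly P w \<le> 1" using wQ mpos by (simp add: P_def field_simps)
  qed
qed



lemma poly_sin_exp_sums: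
  fixes G :: "real poly" and \<alpha> :: real
  assumes al: "\<alpha> > 0" and n: "2 * degree G + 1 \<le> n"
  shows "(\<lambda>t. complex_of_real (poly G (sin (\<alpha> * t)))) \<in> exp_sums n"
proof -
  define D where "D = degree G"
  define lam where "lam j = (real j - real D) * \<alpha>" for j
  define e where "e j t = exp (\<i> * complex_of_real (lam j * t))" for j t
  define g where "g d k = complex_of_real (coeff G d) * of_nat (d choose k) * (-1) ^ (d - k) / (2 * \<i>) ^ d" for d k
  define a where "a j = (\<Sum>d\<le>D. \<Sum>k\<le>d. if j = 2 * k + D - d then g d k else 0)" for j
  have ek: "exp (\<i> * complex_of_real (\<alpha> * t)) ^ k * exp (- (\<i> * complex_of_real (\<alpha> * t))) ^ (d - k)
      = e (2 * k + D - d) t" if "k \<le> d" "d \<le> D" for k d t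
  proof -
    have "exp (\<i> * complex_of_real (\<alpha> * t)) ^ k * exp (- (\<i> * complex_of_real (\<alpha> * t))) ^ (d - k)
        = exp (of_nat k * (\<i> * complex_of_real (\<alpha> * t)) + of_nat (d - k) * (- (\<i> * complex_of_real (\<alpha> * t))))"
      by (simp only: exp_add exp_of_nat_mult)
    also have "of_nat k * (\<i> * complex_of_real (\<alpha> * t)) + of_nat (d - k) * (- (\<i> * complex_of_real (\<alpha> * t)))
        = \<i> * complex_of_real (lam (2 * k + D - d) * t)"
      using that by (simp add: lam_def of_nat_diff algebra_simps)
    finally show ?thesis by (simp add: e_def)
  qed
  have pt: "complex_of_real (poly G (sin (\<alpha> * t))) = (\<Sum>d\<le>D. \<Sum>k\<le>d. g d k * e (2 * k + D - d) t)" for t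
  proof -
    let ?A = "exp (\<i> * complex_of_real (\<alpha> * t))" and ?B = "exp (- (\<i> * complex_of_real (\<alpha> * t)))"
    have s: "complex_of_real (sin (\<alpha> * t)) = (?A - ?B) / (2 * \<i>)"
      by (simp add: sin_of_real[symmetric] sin_exp_eq)
    have "complex_of_real (poly G (sin (\<alpha> * t))) = (\<Sum>d\<le>D. complex_of_real (coeff G d) * complex_of_real (sin (\<alpha> * t)) ^ d)"
      by (simp add: poly_altdef D_def)
    also have "\<dots> = (\<Sum>d\<le>D. complex_of_real (coeff G d) * (?A + (- ?B)) ^ d / (2 * \<i>) ^ d)"
      unfolding s power_divide by (simp only: diff_conv_add_uminus times_divide_eq_right)
    also have "\<dots> = (\<Sum>d\<le>D. \<Sum>k\<le>d. g d k * e (2 * k + D - d) t)"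
    proof (rule sum.cong[OF refl])
      fix d assume "d \<in> {..D}"
      then have dD: "d \<le> D" by simp
      have "complex_of_real (coeff G d) * (?A + (- ?B)) ^ d / (2 * \<i>) ^ d
          = (\<Sum>k\<le>d. complex_of_real (coeff G d) * of_nat (d choose k) * ?A ^ k * (- ?B) ^ (d - k) / (2 * \<i>) ^ d)"
        unfolding binomial_ring by (simp add: sum_distrib_left sum_divide_distrib mult.assoc)
      also have "\<dots> = (\<Sum>k\<le>d. g d k * e (2 * k + D - d) t)"
      proof (rule sum.cong[OF refl])
        fix k assume "k \<in> {..d}"
        then have "k \<le> d" by simp
        then show "complex_of_real (coeff G d) * of_nat (d choose k) * ?A ^ k * (- ?B) ^ (d - k) / (2 * \<i>) ^ d
            = g d k * e (2 * k + D - d) t" (is "?l = ?r")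
        proof -
          have pm: "(- ?B) ^ (d - k) = (-1) ^ (d - k) * ?B ^ (d - k)" by (rule power_minus)
          show "?l = ?r" unfolding pm g_def using ek[of k d t] dD \<open>k \<le> d\<close> by (simp add: algebra_simps)
        qed
      qed
      finally show "complex_of_real (coeff G d) * (?A + (- ?B)) ^ d / (2 * \<i>) ^ d = (\<Sum>k\<le>d. g d k * e (2 * k + D - d) t)" .
    qed
    finally show ?thesis .
  qed
  have re: "(\<Sum>j<n. a j * e j t) = (\<Sum>d\<le>D. \<Sum>k\<le>d. g d k * e (2 * k + D - d) t)" for t
  proof -
    have "(\<Sum>j<n. a j * e j t) = (\<Sum>j<n. \<Sum>d\<le>D. \<Sum>k\<le>d. if j = 2 * k + D - d then g d k * e j t else 0)"
      unfolding a_def sum_distrib_right by (intro sum.cong refl) simp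
    also have "\<dots> = (\<Sum>d\<le>D. \<Sum>k\<le>d. \<Sum>j<n. if j = 2 * k + D - d then g d k * e j t else 0)"
      by (subst sum.swap) (simp add: sum.swap[of _ "{..<n}"])
    also have "\<dots> = (\<Sum>d\<le>D. \<Sum>k\<le>d. g d k * e (2 * k + D - d) t)"
    proof (intro sum.cong refl)
      fix d k assume "d \<in> {..D}" "k \<in> {..d}"
      then have "2 * k + D - d < n" using n by (simp add: D_def)
      then show "(\<Sum>j<n. if j = 2 * k + D - d then g d k * e j t else 0) = g d k * e (2 * k + D - d) t"
        by (simp add: sum.delta)
    qed
    finally show ?thesis .
  qed
  show ?thesis unfolding exp_sums_def
  proof (intro CollectI exI[of _ a] exI[of _ lam] conjI allI impI)
    fix i j assume "i < j \<and> j < n"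
    then show "lam i < lam j" using al by (simp add: lam_def)
  next
    fix t show "complex_of_real (poly G (sin (\<alpha> * t))) = (\<Sum>j<n. a j * exp (\<i> * complex_of_real (lam j * t)))"
      using pt[of t] re[of t] by (simp add: e_def)
  qed
qed



lemma sin_ge_half: assumes "0 \<le> x" "x \<le> pi/3" shows "x/2 \<le> sin x"
proof -
  have "(\<lambda>y. sin y - y/2) 0 \<le> (\<lambda>y. sin y - y/2) x"
  proof (rule DERIV_nonneg_imp_increasing_open[OF assms(1)])
    fix y assume y: "0 < y" "y < x"
    have "cos (pi/3) \<le> cos y"
      using y assms by (subst cos_mono_le_eq) auto
    then have "cos y - 1/2 \<ge> 0" by (simp add: cos_60)
    moreover have "DERIV (\<lambda>y. sin y - y/2) y :> cos y - 1/2"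
      by (auto intro!: derivative_eq_intros)
    ultimately show "\<exists>d. DERIV (\<lambda>y. sin y - y/2) y :> d \<and> d \<ge> 0" by blast
  next
    show "continuous_on {0..x} (\<lambda>y. sin y - y/2)" by (intro continuous_intros) auto
  qed
  then show ?thesis by simp
qed

lemma exp_m1: "1/512 \<le> exp (-1::real)"
proof -
  have "1/2 \<le> exp (-1/2::real)" using exp_ge_add_one_self[of "-1/2::real"] by simp
  then have "(1/2)^2 \<le> exp (-1/2::real) ^ 2" by (rule power_mono) simp
  also have "exp (-1/2::real) ^ 2 = exp (-1)" by (simp flip: exp_of_nat_mult)
  finally have "1/4 \<le> exp (-1::real)" by (simp add: power2_eq_square)
  then show ?thesis by linarith
qed

lemma num_bound:
  fixes q :: real and m n :: nat
  assumes q: "q > 0" and m: "m \<ge> 1" and mn: "real n * q \<le> 2 * real m * (2 + q)"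
  shows "(1/512) powr (q + 1) * (1 + q * real n) ^ 2 \<le> real m ^ 2 / 8"
proof -
  have cq: "(1/512::real) powr q \<le> exp (-q)"
  proof -
    have "(1/512::real) powr q \<le> exp (-1) powr q" using exp_m1 q by (intro powr_mono2) auto
    also have "exp (-1) powr q = exp (-q)" by (simp add: powr_def)
    finally show ?thesis .
  qed
  have e: "(2 + q)^2 \<le> 4 * exp q"
  proof -
    have "1 + q/2 \<le> exp (q/2)" by (rule exp_ge_add_one_self)
    then have "(1 + q/2)^2 \<le> exp (q/2)^2" by (rule power_mono) (use q in simp)
    also have "exp (q/2)^2 = exp q" by (simp flip: exp_of_nat_mult)
    finally show ?thesis by (simp add: power2_eq_square algebra_simps)
  qed
  have mlow: "(1 + q * real n) \<le> 4 * (2 + q) * real m"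
  proof -
    have m1: "real m \<ge> 1" using m by simp
    have "2 * (2+q) * 1 \<le> 2 * (2+q) * real m" using q m1 by (intro mult_left_mono) auto
    then have "1 \<le> 4 * (2+q) * real m / 2" using q by (simp add: algebra_simps)
    moreover have "q * real n \<le> 4 * (2 + q) * real m / 2" using mn by (simp add: algebra_simps)
    ultimately show ?thesis by simp
  qed
  have "(1 + q * real n) ^ 2 \<le> (4 * (2 + q) * real m) ^ 2"
    using mlow q by (intro power_mono) auto
  also have "\<dots> = 16 * (2+q)^2 * real m ^ 2" by (simp add: power2_eq_square algebra_simps)
  finally have A: "(1 + q * real n) ^ 2 \<le> 16 * (2+q)^2 * real m ^ 2" .
  have "(1/512::real) powr (q + 1) = (1/512) * (1/512) powr q"
    by (simp add: powr_add)
  also have "\<dots> \<le> (1/512) * exp (-q)" using cq by simp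
  finally have B: "(1/512::real) powr (q + 1) \<le> (1/512) * exp (-q)" .
  have "(1/512) powr (q + 1) * (1 + q * real n) ^ 2 \<le> ((1/512) * exp (-q)) * (16 * (2+q)^2 * real m ^ 2)"
    using A B by (intro mult_mono) auto
  also have "\<dots> \<le> ((1/512) * exp (-q)) * (16 * (4 * exp q) * real m ^ 2)"
    using e by (intro mult_left_mono mult_right_mono) auto
  also have "\<dots> = real m ^ 2 / 8 * (exp (-q) * exp q)" by simp
  also have "exp (-q) * exp q = 1" by (simp flip: exp_add)
  finally show ?thesis by simp
qed

lemma int_bound:
  fixes b :: real assumes b: "b > 0"
  shows "((\<lambda>t. 4 / (1 + b * t)^2) has_integral (4/b - 4/(b*(1+b)))) {0..1}"
proof -
  have "((\<lambda>t. 4 / (1 + b * t)^2) has_integral ((\<lambda>t. - 4/(b*(1+b*t))) 1 - (\<lambda>t. - 4/(b*(1+b*t))) 0)) {0..1}"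
  proof (rule fundamental_theorem_of_calculus)
    fix t :: real assume t: "t \<in> {0..1}"
    then have pos: "1 + b * t > 0" using b by (simp add: add_pos_nonneg)
    have "((\<lambda>t. - 4/(b*(1+b*t))) has_real_derivative (4 / (1 + b * t)^2)) (at t within {0..1})"
    proof -
      have ne: "b + b * (b * t) \<noteq> 0" using pos b
        by (metis distrib_left mult_eq_0_iff mult_1_right order_less_irrefl)
      have "b * (b * 4) / (b * (1 + b * t)) ^ 2 = 4 / (1 + b * t)^2"
        using pos b by (simp add: power_mult_distrib power2_eq_square)
      then show ?thesis using pos b ne
        by (auto intro!: derivative_eq_intros simp: algebra_simps power2_eq_square)
    qed
    then show "((\<lambda>t. - 4/(b*(1+b*t))) has_vector_derivative (4 / (1 + b * t)^2)) (at t within {0..1})"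
      by (simp add: has_real_derivative_iff_has_vector_derivative)
  qed simp
  then show ?thesis by simp
qed



theorem theorem2p7:
  shows "\<exists>c::real. c > 0 \<and>
    (\<forall>(n::nat) (q::real). n \<ge> 1 \<longrightarrow> q > 0 \<longrightarrow>
      (SUP f\<in>{f \<in> exp_sums n. f \<noteq> (\<lambda>_. 0)}. ereal (norm (f 0) / Lq01_norm q f))
        \<ge> ereal (c powr (1 + 1 / q) * (1 + q * real n) powr (2 / q)))"
proof (intro exI[of _ "1/512"] conjI allI impI)
  show "(0::real) < 1/512" by simp
  fix n :: nat and q :: real assume n: "n \<ge> 1" and q: "q > 0"
  define r where "r = nat \<lceil>2/q\<rceil>"
  have cc: "real_of_int \<lceil>2/q\<rceil> - 1 < 2/q" "2/q \<le> real_of_int \<lceil>2/q\<rceil>"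
    using ceiling_correct[of "2/q"] by auto
  have rr: "real r = real_of_int \<lceil>2/q\<rceil>" unfolding r_def using cc q
    by (simp add: order_trans[OF _ cc(2)])
  have "2/q * q \<le> real_of_int \<lceil>2/q\<rceil> * q" using cc(2) q by (intro mult_right_mono) auto
  then have r2: "real r * q \<ge> 2" using q rr by simp
  have "real_of_int \<lceil>2/q\<rceil> * q \<le> (2/q + 1) * q" using cc(1) q by (intro mult_right_mono) auto
  then have rle: "real r * q \<le> 2 + q" using q rr by (simp add: distrib_right)
  have r1: "r \<ge> 1"
  proof (rule ccontr)
    assume "\<not> r \<ge> 1" then have "r = 0" by simp
    with r2 show False by simp
  qed
  define m where "m = (n - 1) div (2 * r) + 1"
  have m1: "m \<ge> 1" by (simp add: m_def)
  have nm: "n \<le> m * (2 * r)"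
  proof -
    have "(n - 1) mod (2 * r) < 2 * r" using r1 by simp
    moreover have "(n - 1) div (2 * r) * (2 * r) + (n - 1) mod (2 * r) = n - 1" by (rule div_mult_mod_eq)
    ultimately show ?thesis unfolding m_def using n by (simp add: algebra_simps)
  qed
  have degb: "2 * (r * (m - 1)) + 1 \<le> n"
  proof -
    have "(n - 1) div (2 * r) * (2 * r) \<le> n - 1" by (rule div_times_less_eq_dividend)
    then show ?thesis unfolding m_def using n by (simp add: algebra_simps)
  qed
  obtain P where P: "degree P \<le> m - 1" "poly P 0 = 1"
    "\<And>w. w \<in> {0..1} \<Longrightarrow> 0 \<le> poly P w \<and> poly P w \<le> 1 \<and> real m ^ 2 * w * poly P w \<le> 1"
    using kernel_poly[OF m1] by blast
  define G where "G = P ^ r"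
  define f where "f = (\<lambda>t. complex_of_real (poly G (sin (pi/3 * t))))"
  have "degree G \<le> degree P * r" unfolding G_def by (rule degree_power_le)
  also have "\<dots> \<le> (m - 1) * r" using P(1) by simp
  finally have "2 * degree G + 1 \<le> n" using degb by (simp add: algebra_simps)
  then have fin: "f \<in> exp_sums n" unfolding f_def by (intro poly_sin_exp_sums) simp
  have f0: "f 0 = 1" using P(2) by (simp add: f_def G_def poly_power)
  have fne: "f \<noteq> (\<lambda>_. 0)" using f0 by auto
  define b where "b = real m ^ 2 / 2"
  have bpos: "b > 0" using m1 by (simp add: b_def)
  define F where "F t = norm (f t) powr q" for t
  have Fle: "F t \<le> 4 / (1 + b * t)^2" if t: "t \<in> {0..1}" for t
  proof -
    define w where "w = sin (pi/3 * t)"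
    have x: "0 \<le> pi/3 * t" "pi/3 * t \<le> pi/3" using t by auto
    have "pi/3 * t / 2 \<le> w" unfolding w_def by (rule sin_ge_half[OF x])
    moreover have "t/2 \<le> pi/3 * t / 2"
    proof -
      have "3 * t \<le> pi * t" using t pi_gt3 by (intro mult_right_mono) auto
      then show ?thesis by simp
    qed
    ultimately have wt: "t/2 \<le> w" by linarith
    have w01: "w \<in> {0..1}" using wt t by (auto simp: w_def)
    define p where "p = poly P w"
    have p: "0 \<le> p" "p \<le> 1" "real m ^ 2 * w * p \<le> 1" using P(3)[OF w01] by (auto simp: p_def)
    have nf: "norm (f t) = p ^ r" using p by (simp add: f_def G_def poly_power p_def w_def norm_power)
    have Fp: "F t \<le> p ^ 2"
    proof (cases "p = 0")
      case True then show ?thesis using r1 by (simp add: F_def nf)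
    next
      case False
      then have pp: "p > 0" using p by simp
      have "F t = (p powr real r) powr q" by (simp add: F_def nf powr_realpow[OF pp])
      also have "\<dots> = p powr (real r * q)" by (simp add: powr_powr)
      also have "\<dots> \<le> p powr 2" using r2 p by (intro powr_mono') auto
      also have "\<dots> = p ^ 2" using p by simp
      finally show ?thesis .
    qed
    have "real m ^ 2 * (t/2) \<le> real m ^ 2 * w" using wt by (intro mult_left_mono) auto
    then have "b * t * p \<le> real m ^ 2 * w * p" unfolding b_def using p
      by (intro mult_right_mono) (auto simp: field_simps)
    then have "p * (1 + b * t) \<le> 2" using p by (simp add: algebra_simps)
    then have "(p * (1 + b * t))^2 \<le> 2^2" using p bpos t by (intro power_mono) auto
    then have "p^2 * (1 + b * t)^2 \<le> 4" by (simp add: power_mult_distrib)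
    moreover have "(1 + b * t)^2 > 0"
    proof -
      have "1 + b * t > 0" using bpos t by (simp add: add_pos_nonneg)
      then show ?thesis by simp
    qed
    ultimately have "p^2 \<le> 4 / (1 + b * t)^2" by (simp add: field_simps)
    with Fp show ?thesis by simp
  qed
  have Fnn: "F t \<ge> 0" for t by (simp add: F_def)
  have Fcont: "continuous_on {0..1} F" unfolding F_def f_def
    by (intro continuous_on_powr' continuous_intros) (use q in auto)
  have sint: "set_integrable lborel {0..1} F"
    unfolding set_integrable_def by (rule borel_integrable_compact[OF compact_Icc Fcont])
  have Lq: "Lq01_norm q f = integral {0..1} F powr (1/q)"
    unfolding Lq01_norm_def using set_borel_integral_eq_integral(2)[OF sint] by (simp add: F_def)
  have Fi: "F integrable_on {0..1}" using set_borel_integral_eq_integral(1)[OF sint] .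
  define I where "I = integral {0..1} F"
  have "I \<le> 4/b - 4/(b*(1+b))" unfolding I_def
    using integral_le[OF Fi has_integral_integrable[OF int_bound[OF bpos]]] Fle
      integral_unique[OF int_bound[OF bpos]] by simp
  also have "\<dots> \<le> 4/b" using bpos by simp
  finally have Ile: "I \<le> 8 / real m ^ 2" by (simp add: b_def)
  have "I \<noteq> 0"
  proof
    assume "I = 0"
    then have "\<forall>x\<in>{0..1}. F x = 0" unfolding I_def
      using integral_eq_0_iff[OF Fcont _ ] Fnn by auto
    then have "F 0 = 0" by auto
    then show False using f0 by (simp add: F_def)
  qed
  moreover have "I \<ge> 0" unfolding I_def using Fi Fnn by (intro integral_nonneg) auto
  ultimately have Ipos: "I > 0" by simp
  have mn: "real n * q \<le> 2 * real m * (2 + q)"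
  proof -
    have "real n \<le> real m * (2 * real r)" using nm by (metis of_nat_le_iff of_nat_mult of_nat_numeral)
    then have "real n * q \<le> real m * (2 * real r) * q" using q by (intro mult_right_mono) auto
    also have "\<dots> = 2 * real m * (real r * q)" by simp
    also have "\<dots> \<le> 2 * real m * (2 + q)" using rle by (intro mult_left_mono) auto
    finally show ?thesis .
  qed
  have "(1/512::real) powr (1 + 1 / q) * (1 + q * real n) powr (2 / q)
      = ((1/512) powr (q + 1) * (1 + q * real n) ^ 2) powr (1/q)"
  proof -
    have "((1/512::real) powr (q + 1)) powr (1/q) = (1/512) powr (1 + 1/q)"
      using q by (simp add: powr_powr field_simps)
    moreover have "((1 + q * real n) ^ 2) powr (1/q) = (1 + q * real n) powr (2/q)"
    proof -
      have pos: "1 + q * real n > 0" using q by (simp add: add_pos_nonneg)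
      have "((1 + q * real n) ^ 2) = (1 + q * real n) powr 2" using pos by simp
      then show ?thesis by (simp add: powr_powr)
    qed
    ultimately show ?thesis by (simp add: powr_mult)
  qed
  also have "\<dots> \<le> (real m ^ 2 / 8) powr (1/q)"
    using num_bound[OF q m1 mn] q by (intro powr_mono2) auto
  also have "\<dots> \<le> (1 / I) powr (1/q)"
  proof (rule powr_mono2)
    show "real m ^ 2 / 8 \<le> 1 / I" using Ile Ipos m1 by (simp add: field_simps)
  qed (use q in auto)
  also have "\<dots> = norm (f 0) / Lq01_norm q f"
    by (simp add: Lq f0 powr_divide I_def)
  finally have key: "ereal ((1/512::real) powr (1 + 1 / q) * (1 + q * real n) powr (2 / q))
      \<le> ereal (norm (f 0) / Lq01_norm q f)" by simp
  show "ereal ((1/512::real) powr (1 + 1 / q) * (1 + q * real n) powr (2 / q))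
      \<le> (SUP f\<in>{f \<in> exp_sums n. f \<noteq> (\<lambda>_. 0)}. ereal (norm (f 0) / Lq01_norm q f))"
    using key by (rule order_trans) (rule SUP_upper, use fin fne in simp)
qed


end
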